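(* Let $D$ be a BN distribution on $\{0,1\}^n$ with all conditional probabilities in $(0,1)$ and BN-induced basis $\{\phi_S\}$, let $f:\{0,1\}^n\to\{-1,1\}$, $\epsilon\in(0,1]$, $T\ge1$, and suppose there is $g=\sum_{S\in\mathcal{T}}g_S\phi_S$ with $|\mathcal{T}|=T$ and $\mathbb{E}_D[(f-g)^2]\le\epsilon$. Let $\mathcal{S}=\{S:|\hat f_S|\ge\sqrt{\epsilon/T}\}$ (so $|\mathcal{S}|\le T/\epsilon$). Let $\mathcal{S}^*\supseteq\mathcal{S}$ with $|\mathcal{S}^*|\le4T/\epsilon$, and let $\tilde f_S$ ($S\in\mathcal{S}^*$) be numbers with $|\tilde f_S-\hat f_S|\le\gamma$ where $\gamma\le\epsilon^2/(4T)$. Define $h_1=\sum_{S\in\mathcal{S}}\hat f_S\phi_S$, $h_2=\sum_{S\in\mathcal{S}}\tilde f_S\phi_S$, $h_3=\sum_{S\in\mathcal{S}^*}\tilde f_S\phi_S$. Then $\mathbb{E}_D[(f-h_1)^2]\le2\epsilon$, $\mathbb{E}_D[(f-h_2)^2]\le3\epsilon$, and $$P_D[f(X)\neq\operatorname{sign}(h_3(X))]\le\mathbb{E}_D[(f-h_3)^2]\le3\epsilon.$$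
   Context: For a BN with parent sets $\operatorname{pa}(v)$, $\mu_{v,x_{\operatorname{pa}(v)}}=P(X_v=1\mid X_{\operatorname{pa}(v)}=x_{\operatorname{pa}(v)})$, $\sigma_{v,x_{\operatorname{pa}(v)}}=\sqrt{\mu_{v,x_{\operatorname{pa}(v)}}(1-\mu_{v,x_{\operatorname{pa}(v)}})}$, the BN-induced basis is $\phi_v(x)=(x_v-\mu_{v,x_{\operatorname{pa}(v)}})/\sigma_{v,x_{\operatorname{pa}(v)}}$, $\phi_S=\prod_{v\in S}\phi_v$; $\hat f_S=\mathbb{E}_D[f(X)\phi_S(X)]$. *)

theory Defs
  imports Complex_Main
begin

text \<open>Bayesian network on variables 0..n-1. An assignment x in {0,1}^n is encoded as
 the set of indices v < n with x_v = 1 (so assignments are the elements of Pow {..<n}).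
 pa v is the parent set of v, mu v c = P(X_v = 1 | X_pa(v) = c) where the parent
 configuration c is encoded as the subset of pa v whose values are 1.\<close>

definition bn_dag :: "nat \<Rightarrow> (nat \<Rightarrow> nat set) \<Rightarrow> bool" where
  "bn_dag n pa \<longleftrightarrow> (\<forall>v<n. pa v \<subseteq> {..<n}) \<and> acyclic {(u, v). v < n \<and> u \<in> pa v}"

definition bn_pmf :: "nat \<Rightarrow> (nat \<Rightarrow> nat set) \<Rightarrow> (nat \<Rightarrow> nat set \<Rightarrow> real) \<Rightarrow> nat set \<Rightarrow> real" where
  "bn_pmf n pa mu x = (\<Prod>v<n. if v \<in> x then mu v (x \<inter> pa v) else 1 - mu v (x \<inter> pa v))"

definition bn_expect :: "nat \<Rightarrow> (nat \<Rightarrow> nat set) \<Rightarrow> (nat \<Rightarrow> nat set \<Rightarrow> real) \<Rightarrow> (nat set \<Rightarrow> real) \<Rightarrow> real" where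
  "bn_expect n pa mu F = (\<Sum>x\<in>Pow {..<n}. bn_pmf n pa mu x * F x)"

definition bn_prob :: "nat \<Rightarrow> (nat \<Rightarrow> nat set) \<Rightarrow> (nat \<Rightarrow> nat set \<Rightarrow> real) \<Rightarrow> (nat set \<Rightarrow> bool) \<Rightarrow> real" where
  "bn_prob n pa mu A = (\<Sum>x\<in>{x\<in>Pow {..<n}. A x}. bn_pmf n pa mu x)"

definition bn_phi1 :: "(nat \<Rightarrow> nat set) \<Rightarrow> (nat \<Rightarrow> nat set \<Rightarrow> real) \<Rightarrow> nat \<Rightarrow> nat set \<Rightarrow> real" where
  "bn_phi1 pa mu v x =
     ((if v \<in> x then 1 else 0) - mu v (x \<inter> pa v)) /
     sqrt (mu v (x \<inter> pa v) * (1 - mu v (x \<inter> pa v)))"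

definition bn_phi :: "(nat \<Rightarrow> nat set) \<Rightarrow> (nat \<Rightarrow> nat set \<Rightarrow> real) \<Rightarrow> nat set \<Rightarrow> nat set \<Rightarrow> real" where
  "bn_phi pa mu S x = (\<Prod>v\<in>S. bn_phi1 pa mu v x)"

definition bn_coeff :: "nat \<Rightarrow> (nat \<Rightarrow> nat set) \<Rightarrow> (nat \<Rightarrow> nat set \<Rightarrow> real) \<Rightarrow> (nat set \<Rightarrow> real) \<Rightarrow> nat set \<Rightarrow> real" where
  "bn_coeff n pa mu f S = bn_expect n pa mu (\<lambda>x. f x * bn_phi pa mu S x)"

end

theory Submission
  imports Defs
begin

lemma sink_exists:
  assumes dag: "bn_dag n pa" and W: "W \<subseteq> {..<n}" "W \<noteq> {}"
  obtains v where "v \<in> W" "\<And>u. u \<in> W \<Longrightarrow> v \<notin> pa u"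
proof -
  let ?R = "{(u, v). v < n \<and> u \<in> pa v} \<inter> (W \<times> W)"
  have fin: "finite ?R" using W by (meson finite_SigmaI finite_Int finite_lessThan finite_subset)
  have ac: "acyclic ?R" using dag unfolding bn_dag_def by (meson acyclic_subset inf_le1)
  have wf: "wf (?R\<inverse>)" by (rule finite_acyclic_wf_converse[OF fin ac])
  obtain x where "x \<in> W" using W by blast
  from wfE_min[OF wf this] obtain z where z: "z \<in> W" "\<And>y. (y, z) \<in> ?R\<inverse> \<Longrightarrow> y \<notin> W" by blast
  show ?thesis
  proof (rule that[OF z(1)])
    fix u assume u: "u \<in> W" show "z \<notin> pa u"
    proof
      assume "z \<in> pa u"
      hence "(u, z) \<in> ?R\<inverse>" using u z(1) W by auto
      with z(2) u show False by blast
    qed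
  qed
qed

definition pW :: "(nat \<Rightarrow> nat set) \<Rightarrow> (nat \<Rightarrow> nat set \<Rightarrow> real) \<Rightarrow> nat set \<Rightarrow> nat set \<Rightarrow> real" where
  "pW pa mu W x = (\<Prod>v\<in>W. if v \<in> x then mu v (x \<inter> pa v) else 1 - mu v (x \<inter> pa v))"

lemma sum_Pow_split:
  assumes "finite W'" "v \<notin> W'"
  shows "(\<Sum>x\<in>Pow (insert v W'). F x) = (\<Sum>y\<in>Pow W'. F y + F (insert v y))"
proof -
  have "(\<Sum>x\<in>Pow (insert v W'). F x) = (\<Sum>x\<in>Pow W'. F x) + (\<Sum>x\<in>insert v ` Pow W'. F x)"
    unfolding Pow_insert by (rule sum.union_disjoint) (use assms in auto)
  also have "(\<Sum>x\<in>insert v ` Pow W'. F x) = (\<Sum>y\<in>Pow W'. F (insert v y))"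
    by (rule sum.reindex_cong[where l="insert v"]) (use assms in \<open>auto simp: inj_on_def\<close>)
  finally show ?thesis by (simp add: sum.distrib)
qed

lemma ortho_gen:
  assumes dag: "bn_dag n pa" and mu_pos: "\<forall>v<n. \<forall>c\<subseteq>pa v. 0 < mu v c \<and> mu v c < 1"
  shows "finite W \<Longrightarrow> W \<subseteq> {..<n} \<Longrightarrow> (\<forall>v\<in>W. pa v \<subseteq> W) \<Longrightarrow> S \<subseteq> W \<Longrightarrow> T \<subseteq> W \<Longrightarrow>
    (\<Sum>x\<in>Pow W. pW pa mu W x * (bn_phi pa mu S x * bn_phi pa mu T x)) = (if S = T then 1 else 0)"
proof (induction "card W" arbitrary: W S T)
  case 0
  hence "W = {}" "S = {}" "T = {}" by auto
  thus ?case by (simp add: pW_def bn_phi_def)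
next
  case (Suc k)
  hence "W \<noteq> {}" by auto
  then obtain v where v: "v \<in> W" "\<And>u. u \<in> W \<Longrightarrow> v \<notin> pa u"
    using sink_exists[OF dag Suc(4)] by blast
  define W' where "W' = W - {v}"
  have W: "W = insert v W'" "v \<notin> W'" "finite W'" using v Suc W'_def by auto
  have cW': "k = card W'" using Suc W by simp
  have anc: "\<forall>u\<in>W'. pa u \<subseteq> W'" using Suc(5) v W'_def by blast
  have ihyp: "(\<Sum>x\<in>Pow W'. pW pa mu W' x * (bn_phi pa mu (S - {v}) x * bn_phi pa mu (T - {v}) x))
      = (if S - {v} = T - {v} then 1 else 0)"
  proof (rule Suc(1)[OF cW' W(3)])
    show "W' \<subseteq> {..<n}" using Suc(4) W'_def by blast
    show "\<forall>u\<in>W'. pa u \<subseteq> W'" by (rule anc)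
    show "S - {v} \<subseteq> W'" using Suc(6) W'_def by blast
    show "T - {v} \<subseteq> W'" using Suc(7) W'_def by blast
  qed
  define br where "br y = (let m = mu v (y \<inter> pa v); s = sqrt (m * (1 - m)) in
      (1 - m) * (if v \<in> S then (0 - m) / s else 1) * (if v \<in> T then (0 - m) / s else 1)
      + m * (if v \<in> S then (1 - m) / s else 1) * (if v \<in> T then (1 - m) / s else 1))" for y
  have brc: "br y = (if (v \<in> S) = (v \<in> T) then 1 else 0)" if y: "y \<subseteq> W'" for y
  proof -
    define m where "m = mu v (y \<inter> pa v)"
    have m: "0 < m" "m < 1" using mu_pos v(1) Suc(4) unfolding m_def by auto
    have s2: "sqrt (m * (1 - m)) ^ 2 = m * (1 - m)" using m by simp
    have sp: "sqrt (m * (1 - m)) > 0" using m by simp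
    define s where "s = sqrt (m * (1 - m))"
    have ss: "s * s = m * (1 - m)" using s2 unfolding s_def by (simp add: power2_eq_square)
    have sn: "s \<noteq> 0" using sp m unfolding s_def by simp
    have c1: "(1 - m) * ((0 - m) / s) * ((0 - m) / s) + m * ((1 - m) / s) * ((1 - m) / s) = 1"
    proof -
      have "(1 - m) * ((0 - m) / s) * ((0 - m) / s) + m * ((1 - m) / s) * ((1 - m) / s)
          = (m * (1 - m)) / (s * s)" using sn by (simp add: field_simps)
      thus ?thesis using ss m by simp
    qed
    have c2: "(1 - m) * ((0 - m) / s) + m * ((1 - m) / s) = 0" using sn by (simp add: field_simps)
    show ?thesis unfolding br_def m_def[symmetric] Let_def s_def[symmetric]
      using c1 c2 by (cases "v \<in> S"; cases "v \<in> T") (simp_all add: mult.commute)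
  qed
  have phisplit: "bn_phi pa mu S z = (if v \<in> S then bn_phi1 pa mu v z else 1) * bn_phi pa mu (S - {v}) y"
    if "z = y \<or> z = insert v y" "y \<subseteq> W'" "S \<subseteq> W" for S y z
  proof -
    have eq: "bn_phi1 pa mu u z = bn_phi1 pa mu u y" if "u \<in> S - {v}" for u
    proof -
      have "u \<in> W" "u \<noteq> v" using that \<open>S \<subseteq> W\<close> by auto
      hence "z \<inter> pa u = y \<inter> pa u" "(u \<in> z) = (u \<in> y)" using v(2)[of u] \<open>z = y \<or> z = insert v y\<close> by auto
      thus ?thesis unfolding bn_phi1_def by simp
    qed
    have fS: "finite S" using \<open>S \<subseteq> W\<close> Suc(3) finite_subset by blast
    show ?thesis
    proof (cases "v \<in> S")
      case True
      hence "S = insert v (S - {v})" by auto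
      hence "bn_phi pa mu S z = bn_phi1 pa mu v z * bn_phi pa mu (S - {v}) z"
        unfolding bn_phi_def using fS by (metis Diff_iff finite_Diff insertI1 prod.insert)
      thus ?thesis using True eq unfolding bn_phi_def by simp
    next
      case False thus ?thesis using eq unfolding bn_phi_def by simp
    qed
  qed
  have pWsplit: "pW pa mu W z = (if v \<in> z then mu v (y \<inter> pa v) else 1 - mu v (y \<inter> pa v)) * pW pa mu W' y"
    if "z = y \<or> z = insert v y" "y \<subseteq> W'" for y z
  proof -
    have "pW pa mu W z = (if v \<in> z then mu v (z \<inter> pa v) else 1 - mu v (z \<inter> pa v)) * pW pa mu W' z"
      unfolding pW_def using W by simp
    moreover have "z \<inter> pa v = y \<inter> pa v" using v(2)[OF v(1)] that by auto
    moreover have "pW pa mu W' z = pW pa mu W' y" unfolding pW_def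
    proof (rule prod.cong[OF refl])
      fix u assume "u \<in> W'"
      hence "u \<in> W" "u \<noteq> v" using W by auto
      hence "z \<inter> pa u = y \<inter> pa u" "(u \<in> z) = (u \<in> y)" using v(2)[of u] that by auto
      thus "(if u \<in> z then mu u (z \<inter> pa u) else 1 - mu u (z \<inter> pa u)) =
            (if u \<in> y then mu u (y \<inter> pa u) else 1 - mu u (y \<inter> pa u))" by simp
    qed
    ultimately show ?thesis by simp
  qed
  have "(\<Sum>x\<in>Pow W. pW pa mu W x * (bn_phi pa mu S x * bn_phi pa mu T x))
     = (\<Sum>y\<in>Pow W'. br y * (pW pa mu W' y * (bn_phi pa mu (S - {v}) y * bn_phi pa mu (T - {v}) y)))"
    unfolding W(1) sum_Pow_split[OF W(3) W(2)]
  proof (rule sum.cong[OF refl])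
    fix y assume y: "y \<in> Pow W'"
    hence y': "y \<subseteq> W'" "v \<notin> y" using W by auto
    have p1: "bn_phi1 pa mu v y = (0 - mu v (y \<inter> pa v)) / sqrt (mu v (y \<inter> pa v) * (1 - mu v (y \<inter> pa v)))"
      using y' unfolding bn_phi1_def by simp
    have "insert v y \<inter> pa v = y \<inter> pa v" using v(2)[OF v(1)] by auto
    hence p2: "bn_phi1 pa mu v (insert v y) = (1 - mu v (y \<inter> pa v)) / sqrt (mu v (y \<inter> pa v) * (1 - mu v (y \<inter> pa v)))"
      unfolding bn_phi1_def by simp
    define m where "m = mu v (y \<inter> pa v)"
    define P where "P = pW pa mu W' y"
    define PS where "PS = bn_phi pa mu (S - {v}) y"
    define PT where "PT = bn_phi pa mu (T - {v}) y"
    define a0S where "a0S = (if v \<in> S then bn_phi1 pa mu v y else 1)"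
    define a1S where "a1S = (if v \<in> S then bn_phi1 pa mu v (insert v y) else 1)"
    define a0T where "a0T = (if v \<in> T then bn_phi1 pa mu v y else 1)"
    define a1T where "a1T = (if v \<in> T then bn_phi1 pa mu v (insert v y) else 1)"
    have e1: "pW pa mu W y = (1 - m) * P" using pWsplit[of y y] y' unfolding m_def P_def by simp
    have e2: "pW pa mu W (insert v y) = m * P" using pWsplit[of "insert v y" y] y' unfolding m_def P_def by simp
    have e3: "bn_phi pa mu S y = a0S * PS" using phisplit[of y y S] y' Suc(6) unfolding a0S_def PS_def by simp
    have e4: "bn_phi pa mu T y = a0T * PT" using phisplit[of y y T] y' Suc(7) unfolding a0T_def PT_def by simp
    have e5: "bn_phi pa mu S (insert v y) = a1S * PS" using phisplit[of "insert v y" y S] y' Suc(6) unfolding a1S_def PS_def by simp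
    have e6: "bn_phi pa mu T (insert v y) = a1T * PT" using phisplit[of "insert v y" y T] y' Suc(7) unfolding a1T_def PT_def by simp
    have e7: "br y = (1 - m) * a0S * a0T + m * a1S * a1T"
      unfolding br_def Let_def m_def[symmetric] a0S_def a1S_def a0T_def a1T_def p1 p2 by simp
    have "pW pa mu W y * (bn_phi pa mu S y * bn_phi pa mu T y) +
          pW pa mu W (insert v y) * (bn_phi pa mu S (insert v y) * bn_phi pa mu T (insert v y)) =
          br y * (pW pa mu W' y * (bn_phi pa mu (S - {v}) y * bn_phi pa mu (T - {v}) y))"
      unfolding e1 e2 e3 e4 e5 e6 e7 P_def[symmetric] PS_def[symmetric] PT_def[symmetric]
      by (simp add: algebra_simps)
    thus "pW pa mu (insert v W') y * (bn_phi pa mu S y * bn_phi pa mu T y) +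
          pW pa mu (insert v W') (insert v y) * (bn_phi pa mu S (insert v y) * bn_phi pa mu T (insert v y)) =
          br y * (pW pa mu W' y * (bn_phi pa mu (S - {v}) y * bn_phi pa mu (T - {v}) y))"
      using W(1) by simp
  qed
  also have "\<dots> = (if (v \<in> S) = (v \<in> T) then 1 else 0) *
      (\<Sum>y\<in>Pow W'. pW pa mu W' y * (bn_phi pa mu (S - {v}) y * bn_phi pa mu (T - {v}) y))"
    by (subst sum_distrib_left, rule sum.cong[OF refl]) (simp add: brc)
  also have "\<dots> = (if S = T then 1 else 0)" unfolding ihyp by auto
  finally show ?case .
qed


lemma ortho:
  assumes dag: "bn_dag n pa" and mu_pos: "\<forall>v<n. \<forall>c\<subseteq>pa v. 0 < mu v c \<and> mu v c < 1"
    and "S \<subseteq> {..<n}" "T \<subseteq> {..<n}"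
  shows "bn_expect n pa mu (\<lambda>x. bn_phi pa mu S x * bn_phi pa mu T x) = (if S = T then 1 else 0)"
proof -
  have "bn_pmf n pa mu = pW pa mu {..<n}" by (rule ext) (simp add: bn_pmf_def pW_def)
  moreover have "\<forall>v\<in>{..<n}. pa v \<subseteq> {..<n}" using dag unfolding bn_dag_def by auto
  ultimately show ?thesis unfolding bn_expect_def using ortho_gen[OF dag mu_pos, of "{..<n}" S T] assms
    by simp
qed

lemma expand:
  fixes p f :: "'x \<Rightarrow> real" and \<phi> :: "'s \<Rightarrow> 'x \<Rightarrow> real"
  assumes fin: "finite A"
    and orth: "\<And>S T. S \<in> A \<Longrightarrow> T \<in> A \<Longrightarrow> (\<Sum>x\<in>X. p x * (\<phi> S x * \<phi> T x)) = (if S = T then 1 else 0)"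
  shows "(\<Sum>x\<in>X. p x * (f x - (\<Sum>S\<in>A. c S * \<phi> S x))\<^sup>2)
     = (\<Sum>x\<in>X. p x * (f x)\<^sup>2) - 2 * (\<Sum>S\<in>A. c S * (\<Sum>x\<in>X. p x * (f x * \<phi> S x))) + (\<Sum>S\<in>A. (c S)\<^sup>2)"
proof -
  have sq: "(f x - (\<Sum>S\<in>A. c S * \<phi> S x))\<^sup>2 = (f x)\<^sup>2 - 2 * (\<Sum>S\<in>A. c S * (f x * \<phi> S x))
       + (\<Sum>S\<in>A. \<Sum>T\<in>A. c S * c T * (\<phi> S x * \<phi> T x))" for x
    by (simp add: power2_eq_square algebra_simps sum_distrib_left sum_distrib_right sum_product)
  have "(\<Sum>x\<in>X. p x * (f x - (\<Sum>S\<in>A. c S * \<phi> S x))\<^sup>2)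
     = (\<Sum>x\<in>X. p x * (f x)\<^sup>2) - 2 * (\<Sum>x\<in>X. \<Sum>S\<in>A. c S * (p x * (f x * \<phi> S x)))
       + (\<Sum>x\<in>X. \<Sum>S\<in>A. \<Sum>T\<in>A. c S * c T * (p x * (\<phi> S x * \<phi> T x)))"
    unfolding sq by (simp add: algebra_simps sum.distrib sum_subtractf sum_distrib_left)
  also have "(\<Sum>x\<in>X. \<Sum>S\<in>A. c S * (p x * (f x * \<phi> S x))) = (\<Sum>S\<in>A. c S * (\<Sum>x\<in>X. p x * (f x * \<phi> S x)))"
    by (subst sum.swap) (simp add: sum_distrib_left)
  also have "(\<Sum>x\<in>X. \<Sum>S\<in>A. \<Sum>T\<in>A. c S * c T * (p x * (\<phi> S x * \<phi> T x)))
      = (\<Sum>S\<in>A. \<Sum>T\<in>A. c S * c T * (\<Sum>x\<in>X. p x * (\<phi> S x * \<phi> T x)))"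
    by (subst sum.swap, rule sum.cong[OF refl], subst sum.swap) (simp add: sum_distrib_left)
  also have "\<dots> = (\<Sum>S\<in>A. \<Sum>T\<in>A. c S * c T * (if S = T then 1 else 0))"
    using orth by simp
  also have "\<dots> = (\<Sum>S\<in>A. (c S)\<^sup>2)"
    by (rule sum.cong[OF refl]) (simp add: fin power2_eq_square if_distrib sum.delta cong: if_cong)
  finally show ?thesis .
qed


lemma Qform:
  assumes dag: "bn_dag n pa" and mu_pos: "\<forall>v<n. \<forall>c\<subseteq>pa v. 0 < mu v c \<and> mu v c < 1"
    and fin: "finite A" and A: "A \<subseteq> Pow {..<n}"
  shows "bn_expect n pa mu (\<lambda>x. (f x - (\<Sum>S\<in>A. c S * bn_phi pa mu S x))\<^sup>2)
    = bn_expect n pa mu (\<lambda>x. (f x)\<^sup>2) - 2 * (\<Sum>S\<in>A. c S * bn_coeff n pa mu f S) + (\<Sum>S\<in>A. (c S)\<^sup>2)"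
  unfolding bn_coeff_def bn_expect_def
proof (rule expand[OF fin])
  fix S T assume "S \<in> A" "T \<in> A"
  hence "S \<subseteq> {..<n}" "T \<subseteq> {..<n}" using A by auto
  from ortho[OF dag mu_pos this] show "(\<Sum>x\<in>Pow {..<n}. bn_pmf n pa mu x * (bn_phi pa mu S x * bn_phi pa mu T x)) = (if S = T then 1 else 0)"
    unfolding bn_expect_def .
qed

lemma pmf_nonneg:
  assumes mu_pos: "\<forall>v<n. \<forall>c\<subseteq>pa v. 0 < mu v c \<and> mu v c < 1"
  shows "0 \<le> bn_pmf n pa mu x"
  unfolding bn_pmf_def
proof (rule prod_nonneg)
  fix v assume "v \<in> {..<n}"
  hence "0 < mu v (x \<inter> pa v)" "mu v (x \<inter> pa v) < 1" using mu_pos by auto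
  thus "0 \<le> (if v \<in> x then mu v (x \<inter> pa v) else 1 - mu v (x \<inter> pa v))" by auto
qed

theorem mainTheorem16:
  fixes n :: nat and pa :: "nat \<Rightarrow> nat set" and mu :: "nat \<Rightarrow> nat set \<Rightarrow> real"
    and f :: "nat set \<Rightarrow> real" and eps gamma :: real and T :: nat
    and \<T> :: "nat set set" and gc :: "nat set \<Rightarrow> real"
    and Sstar :: "nat set set" and ft :: "nat set \<Rightarrow> real"
  assumes dag: "bn_dag n pa"
    and mu_pos: "\<forall>v<n. \<forall>c\<subseteq>pa v. 0 < mu v c \<and> mu v c < 1"
    and f_pm1: "\<forall>x\<in>Pow {..<n}. f x \<in> {-1, 1}"
    and eps: "0 < eps" "eps \<le> 1"
    and T: "1 \<le> T"
    and TT: "\<T> \<subseteq> Pow {..<n}" "card \<T> = T"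
    and approx: "bn_expect n pa mu (\<lambda>x. (f x - (\<Sum>S\<in>\<T>. gc S * bn_phi pa mu S x))\<^sup>2) \<le> eps"
    and Sstar: "{S\<in>Pow {..<n}. \<bar>bn_coeff n pa mu f S\<bar> \<ge> sqrt (eps / T)} \<subseteq> Sstar"
      "Sstar \<subseteq> Pow {..<n}" "real (card Sstar) \<le> 4 * T / eps"
    and ft: "\<forall>S\<in>Sstar. \<bar>ft S - bn_coeff n pa mu f S\<bar> \<le> gamma"
    and gamma: "gamma \<le> eps\<^sup>2 / (4 * T)"
  shows
    "let \<S> = {S\<in>Pow {..<n}. \<bar>bn_coeff n pa mu f S\<bar> \<ge> sqrt (eps / T)};
         h1 = (\<lambda>x. \<Sum>S\<in>\<S>. bn_coeff n pa mu f S * bn_phi pa mu S x);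
         h2 = (\<lambda>x. \<Sum>S\<in>\<S>. ft S * bn_phi pa mu S x);
         h3 = (\<lambda>x. \<Sum>S\<in>Sstar. ft S * bn_phi pa mu S x)
     in bn_expect n pa mu (\<lambda>x. (f x - h1 x)\<^sup>2) \<le> 2 * eps
      \<and> bn_expect n pa mu (\<lambda>x. (f x - h2 x)\<^sup>2) \<le> 3 * eps
      \<and> bn_prob n pa mu (\<lambda>x. f x \<noteq> sgn (h3 x)) \<le> bn_expect n pa mu (\<lambda>x. (f x - h3 x)\<^sup>2)
      \<and> bn_expect n pa mu (\<lambda>x. (f x - h3 x)\<^sup>2) \<le> 3 * eps"
proof -
  define \<S> where "\<S> = {S\<in>Pow {..<n}. \<bar>bn_coeff n pa mu f S\<bar> \<ge> sqrt (eps / T)}"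
  define fh where "fh S = bn_coeff n pa mu f S" for S
  define Ef2 where "Ef2 = bn_expect n pa mu (\<lambda>x. (f x)\<^sup>2)"
  have finP: "finite (Pow {..<n::nat})" by simp
  have finT: "finite \<T>" using TT finite_subset finP by blast
  have finSs: "finite Sstar" using Sstar(2) finite_subset finP by blast
  have SS: "\<S> \<subseteq> Sstar" "\<S> \<subseteq> Pow {..<n}" using Sstar(1) unfolding \<S>_def by auto
  have finS: "finite \<S>" using SS finSs finite_subset by blast
  have Tpos: "(0::real) < T" using T by simp
  have "bn_expect n pa mu (\<lambda>x. (f x - (\<Sum>S\<in>\<T>. gc S * bn_phi pa mu S x))\<^sup>2)
      = Ef2 - 2 * (\<Sum>S\<in>\<T>. gc S * fh S) + (\<Sum>S\<in>\<T>. (gc S)\<^sup>2)"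
    unfolding Ef2_def fh_def by (rule Qform[OF dag mu_pos finT TT(1)])
  moreover have "(\<Sum>S\<in>\<T>. 2 * (gc S * fh S) - (gc S)\<^sup>2) \<le> (\<Sum>S\<in>\<T>. (fh S)\<^sup>2)"
  proof (rule sum_mono)
    fix S have "0 \<le> (gc S - fh S)\<^sup>2" by simp
    thus "2 * (gc S * fh S) - (gc S)\<^sup>2 \<le> (fh S)\<^sup>2" by (simp add: power2_eq_square algebra_simps)
  qed
  ultimately have K: "Ef2 - (\<Sum>S\<in>\<T>. (fh S)\<^sup>2) \<le> eps"
    using approx by (simp add: sum_subtractf sum_distrib_left)
  have small: "(fh S)\<^sup>2 \<le> eps / T" if "S \<in> \<T> - \<S>" for S
  proof -
    have "\<bar>fh S\<bar> < sqrt (eps / T)" using that TT(1) unfolding \<S>_def fh_def by auto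
    hence "\<bar>fh S\<bar>\<^sup>2 \<le> (sqrt (eps / T))\<^sup>2" by (intro power_mono) auto
    thus ?thesis using eps Tpos by simp
  qed
  have "(\<Sum>S\<in>\<T> - \<S>. (fh S)\<^sup>2) \<le> of_nat (card (\<T> - \<S>)) * (eps / T)"
    by (rule sum_bounded_above) (use small in auto)
  also have "\<dots> \<le> of_nat T * (eps / T)"
    using card_mono[OF finT, of "\<T> - \<S>"] TT(2) eps by (intro mult_right_mono) auto
  also have "\<dots> = eps" using Tpos by simp
  finally have tail: "(\<Sum>S\<in>\<T> - \<S>. (fh S)\<^sup>2) \<le> eps" .
  have splitT: "(\<Sum>S\<in>\<T>. (fh S)\<^sup>2) = (\<Sum>S\<in>\<T> \<inter> \<S>. (fh S)\<^sup>2) + (\<Sum>S\<in>\<T> - \<S>. (fh S)\<^sup>2)"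
    using finT by (metis sum.Int_Diff)
  have "(\<Sum>S\<in>\<T> \<inter> \<S>. (fh S)\<^sup>2) \<le> (\<Sum>S\<in>\<S>. (fh S)\<^sup>2)"
    by (rule sum_mono2[OF finS]) auto
  hence keyS: "Ef2 - (\<Sum>S\<in>\<S>. (fh S)\<^sup>2) \<le> 2 * eps" using K tail splitT by linarith
  have Q1: "bn_expect n pa mu (\<lambda>x. (f x - (\<Sum>S\<in>\<S>. bn_coeff n pa mu f S * bn_phi pa mu S x))\<^sup>2)
      = Ef2 - (\<Sum>S\<in>\<S>. (fh S)\<^sup>2)"
    unfolding Qform[OF dag mu_pos finS SS(2)] Ef2_def fh_def
    by (simp add: power2_eq_square sum.distrib[symmetric] sum_distrib_left[symmetric])
  have errSs: "(\<Sum>S\<in>Sstar. (ft S - fh S)\<^sup>2) \<le> eps"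
  proof (cases "Sstar = {}")
    case True thus ?thesis using eps by simp
  next
    case False
    then obtain S0 where "S0 \<in> Sstar" by blast
    hence g0: "0 \<le> gamma" using ft by force
    have "(\<Sum>S\<in>Sstar. (ft S - fh S)\<^sup>2) \<le> of_nat (card Sstar) * gamma\<^sup>2"
    proof (rule sum_bounded_above)
      fix S assume "S \<in> Sstar"
      hence "\<bar>ft S - fh S\<bar> \<le> gamma" using ft unfolding fh_def by blast
      hence "\<bar>ft S - fh S\<bar>\<^sup>2 \<le> gamma\<^sup>2" by (intro power_mono) auto
      thus "(ft S - fh S)\<^sup>2 \<le> gamma\<^sup>2" by simp
    qed
    also have "\<dots> \<le> (4 * T / eps) * (eps\<^sup>2 / (4 * T))\<^sup>2"
      using Sstar(3) g0 gamma by (intro mult_mono power_mono) auto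
    also have "\<dots> = eps ^ 3 / (4 * T)" using eps Tpos by (simp add: power2_eq_square power3_eq_cube field_simps)
    also have "\<dots> \<le> eps"
    proof -
      have "eps ^ 3 \<le> eps" using eps by (simp add: power_le_one power3_eq_cube mult_le_one)
      also have "eps \<le> eps * (4 * T)" using eps T by simp
      finally show ?thesis using Tpos by (simp add: divide_le_eq)
    qed
    finally show ?thesis .
  qed
  have errS: "(\<Sum>S\<in>\<S>. (ft S - fh S)\<^sup>2) \<le> eps"
    using sum_mono2[OF finSs SS(1), of "\<lambda>S. (ft S - fh S)\<^sup>2"] errSs by simp
  have qid: "\<And>B. (\<Sum>S\<in>B. (ft S)\<^sup>2) - 2 * (\<Sum>S\<in>B. ft S * fh S) = (\<Sum>S\<in>B. (ft S - fh S)\<^sup>2) - (\<Sum>S\<in>B. (fh S)\<^sup>2)"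
    by (simp add: power2_eq_square algebra_simps sum.distrib sum_subtractf sum_distrib_left)
  have Q2: "bn_expect n pa mu (\<lambda>x. (f x - (\<Sum>S\<in>\<S>. ft S * bn_phi pa mu S x))\<^sup>2)
      = Ef2 - (\<Sum>S\<in>\<S>. (fh S)\<^sup>2) + (\<Sum>S\<in>\<S>. (ft S - fh S)\<^sup>2)"
    unfolding Qform[OF dag mu_pos finS SS(2)] Ef2_def[symmetric] fh_def[symmetric] using qid[of \<S>] by linarith
  have Q3: "bn_expect n pa mu (\<lambda>x. (f x - (\<Sum>S\<in>Sstar. ft S * bn_phi pa mu S x))\<^sup>2)
      = Ef2 - (\<Sum>S\<in>Sstar. (fh S)\<^sup>2) + (\<Sum>S\<in>Sstar. (ft S - fh S)\<^sup>2)"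
    unfolding Qform[OF dag mu_pos finSs Sstar(2)] Ef2_def[symmetric] fh_def[symmetric] using qid[of Sstar] by linarith
  have "(\<Sum>S\<in>\<S>. (fh S)\<^sup>2) \<le> (\<Sum>S\<in>Sstar. (fh S)\<^sup>2)" by (rule sum_mono2[OF finSs SS(1)]) auto
  hence B3: "bn_expect n pa mu (\<lambda>x. (f x - (\<Sum>S\<in>Sstar. ft S * bn_phi pa mu S x))\<^sup>2) \<le> 3 * eps"
    using Q3 keyS errSs by linarith
  define h3 where "h3 x = (\<Sum>S\<in>Sstar. ft S * bn_phi pa mu S x)" for x
  have P: "bn_prob n pa mu (\<lambda>x. f x \<noteq> sgn (h3 x)) \<le> bn_expect n pa mu (\<lambda>x. (f x - h3 x)\<^sup>2)"
  proof -
    let ?A = "{x\<in>Pow {..<n}. f x \<noteq> sgn (h3 x)}"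
    have "bn_prob n pa mu (\<lambda>x. f x \<noteq> sgn (h3 x)) = (\<Sum>x\<in>?A. bn_pmf n pa mu x)" unfolding bn_prob_def ..
    also have "\<dots> \<le> (\<Sum>x\<in>?A. bn_pmf n pa mu x * (f x - h3 x)\<^sup>2)"
    proof (rule sum_mono)
      fix x assume x: "x \<in> ?A"
      have "1 \<le> (f x - h3 x)\<^sup>2"
      proof -
        have "f x = 1 \<or> f x = -1" using f_pm1 x by auto
        thus ?thesis
        proof
          assume f1: "f x = 1"
          hence "h3 x \<le> 0" using x by (cases "h3 x > 0") auto
          hence "1 \<le> 1 - h3 x" by simp
          hence "1 \<le> (1 - h3 x)\<^sup>2" by (metis one_le_power)
          thus ?thesis using f1 by simp
        next
          assume f1: "f x = -1"
          hence "h3 x \<ge> 0" using x by (cases "h3 x < 0") auto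
          hence "1 \<le> 1 + h3 x" by simp
          hence "1 \<le> (1 + h3 x)\<^sup>2" by (metis one_le_power)
          thus ?thesis using f1 by (simp add: power2_eq_square algebra_simps)
        qed
      qed
      thus "bn_pmf n pa mu x \<le> bn_pmf n pa mu x * (f x - h3 x)\<^sup>2"
        using pmf_nonneg[OF mu_pos, of x] by (metis mult_left_mono mult.right_neutral)
    qed
    also have "\<dots> \<le> (\<Sum>x\<in>Pow {..<n}. bn_pmf n pa mu x * (f x - h3 x)\<^sup>2)"
      by (rule sum_mono2) (auto intro: mult_nonneg_nonneg pmf_nonneg[OF mu_pos])
    finally show ?thesis unfolding bn_expect_def .
  qed
  show ?thesis
    unfolding Let_def \<S>_def[symmetric]
    using Q1 keyS Q2 errS B3 P unfolding h3_def by linarith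
qed

end
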